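(* Let $R$ be a pmp equivalence relation and $F\subseteq\llbracket R\rrbracket$ finite. Then $s(F)=\lim_{\varepsilon\to0}s_\varepsilon(F)$, and likewise $\underline s(F)=\lim_{\varepsilon\to0}\underline s_\varepsilon(F)$ and $s_\omega(F)=\lim_{\varepsilon\to0}s_{\omega,\varepsilon}(F)$ for every nonprincipal ultrafilter $\omega$.
   Context: Let $(X,\mu)$ be a standard probability space and $R$ a pmp countable Borel equivalence relation. $\llbracket R\rrbracket$ denotes the set of partial measure-preserving Borel bijections between Borel subsets of $X$ with graph contained in $R$, modulo null sets, with composition, inverses and identity $1$. Pairwise orthogonal elements (pairwise disjoint domains and ranges) have a sum; $\mathbf\Sigma F$ is the set of finite sums of pairwise orthogonal elements of $F$; $F_\pm=F\cup\{s^{-1}:s\in F\}\cup\{1\}$; $F_\pm^n$ the products of $n$ elements of $F_\pm$. $|s-t|=\mu\{x\in\operatorname{dom}s\cup\operatorname{dom}t:s(x)\neq t(x)\}$ (with $s(x)\neq t(x)$ on $\operatorname{dom}s\triangle\operatorname{dom}t$), $\tau(s)=\mu\{x\in\operatorname{dom}s:s(x)=x\}$. $\llbracket d\rrbracket$: partial permutations of $\{1,\dots,d\}$ with uniform measure, same distance, trace $\operatorname{tr}$. ${\rm SA}(F,n,\delta,d)$ is the set of maps $\varphi:\llbracket R\rrbracket\to\llbracket d\rrbracket$ with $\varphi(1)=1$ such that $|\varphi(st)-\varphi(s)\varphi(t)|<\delta$ for all $s,t\in\mathbf\Sigma F_\pm^n$ with $st\in\mathbf\Sigma F_\pm^n$,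 and $|\operatorname{tr}(\varphi(s))-\tau(s)|<\delta$ for all $s\in\mathbf\Sigma F_\pm^n$. For maps $\varphi,\psi$ put $|\varphi-\psi|_F=\max_{s\in F}|\varphi(s)-\psi(s)|$, and for $\varepsilon\ge0$ let $N_\varepsilon(S)$ be the minimal number of closed $|\cdot|_F$-balls of radius $\varepsilon$ covering a set $S$ of maps. Define $s_\varepsilon(F)=\inf_n\inf_{\delta>0}\limsup_{d\to\infty}\frac{1}{d\log d}\log N_\varepsilon({\rm SA}(F,n,\delta,d))$ ($\log0=-\infty$); $\underline s_\varepsilon(F)$ uses $\liminf_d$, $s_{\omega,\varepsilon}(F)$ uses $\lim_{d\to\omega}$; $s(F),\underline s(F),s_\omega(F)$ are the case $\varepsilon=0$ (where $N_0$ counts distinct restrictions to $F$). *)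

theory Defs
  imports "HOL-Analysis.Analysis" "HOL-Probability.Probability"
begin

type_synonym 'a pmap = "'a \<Rightarrow> 'a option"

definition pimage :: "'a pmap \<Rightarrow> 'a set \<Rightarrow> 'a set" where
  "pimage f A = {y. \<exists>x\<in>A. f x = Some y}"

definition pgraph_in :: "('a \<times> 'a) set \<Rightarrow> 'a pmap \<Rightarrow> bool" where
  "pgraph_in R f \<longleftrightarrow> (\<forall>x y. f x = Some y \<longrightarrow> (x, y) \<in> R)"

definition borel_pinj :: "'a measure \<Rightarrow> ('a \<times> 'a) set \<Rightarrow> 'a pmap \<Rightarrow> bool" where
  "borel_pinj M R f \<longleftrightarrow> dom f \<in> sets M \<and> ran f \<in> sets M \<and> inj_on f (dom f) \<and> pgraph_in R f
     \<and> (\<forall>B\<in>sets M. {x. \<exists>y\<in>B. f x = Some y} \<in> sets M)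
     \<and> (\<forall>A\<in>sets M. pimage f A \<in> sets M)"

definition pmp_cber :: "'a measure \<Rightarrow> ('a \<times> 'a) set \<Rightarrow> bool" where
  "pmp_cber M R \<longleftrightarrow> equiv (space M) R \<and> R \<in> sets (M \<Otimes>\<^sub>M M)
     \<and> (\<forall>x\<in>space M. countable (R `` {x}))
     \<and> (\<forall>f. borel_pinj M R f \<longrightarrow>
           (\<forall>A\<in>sets M. A \<subseteq> dom f \<longrightarrow> measure M (pimage f A) = measure M A))"

definition pbij :: "'a measure \<Rightarrow> ('a \<times> 'a) set \<Rightarrow> 'a pmap \<Rightarrow> bool" where
  "pbij M R f \<longleftrightarrow> borel_pinj M R f \<and>
     (\<forall>A\<in>sets M. A \<subseteq> dom f \<longrightarrow> measure M (pimage f A) = measure M A)"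

text \<open>The class of f modulo null sets (f x \<noteq> g x includes the symmetric difference of domains).\<close>
definition pm_class :: "'a measure \<Rightarrow> ('a \<times> 'a) set \<Rightarrow> 'a pmap \<Rightarrow> 'a pmap set" where
  "pm_class M R f = {g. pbij M R g \<and> {x. f x \<noteq> g x} \<in> null_sets M}"

text \<open>The full pseudogroup [[R]]: elements are classes modulo null sets.\<close>
definition fullpg :: "'a measure \<Rightarrow> ('a \<times> 'a) set \<Rightarrow> 'a pmap set set" where
  "fullpg M R = {pm_class M R f | f. pbij M R f}"

definition rep :: "'a pmap set \<Rightarrow> 'a pmap" where
  "rep S = (SOME f. f \<in> S)"

definition pinv :: "'a pmap \<Rightarrow> 'a pmap" where
  "pinv f = (\<lambda>y. if \<exists>x. f x = Some y then Some (THE x. f x = Some y) else None)"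

definition pg_mult :: "'a measure \<Rightarrow> ('a \<times> 'a) set \<Rightarrow> 'a pmap set \<Rightarrow> 'a pmap set \<Rightarrow> 'a pmap set" where
  "pg_mult M R S T = pm_class M R (rep S \<circ>\<^sub>m rep T)"

definition pg_inv :: "'a measure \<Rightarrow> ('a \<times> 'a) set \<Rightarrow> 'a pmap set \<Rightarrow> 'a pmap set" where
  "pg_inv M R S = pm_class M R (pinv (rep S))"

definition pg_one :: "'a measure \<Rightarrow> ('a \<times> 'a) set \<Rightarrow> 'a pmap set" where
  "pg_one M R = pm_class M R Some"

definition pg_dist :: "'a measure \<Rightarrow> 'a pmap set \<Rightarrow> 'a pmap set \<Rightarrow> real" where
  "pg_dist M S T = measure M {x. rep S x \<noteq> rep T x}"

definition pg_tr :: "'a measure \<Rightarrow> 'a pmap set \<Rightarrow> real" where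
  "pg_tr M S = measure M {x. rep S x = Some x}"

definition pg_orth :: "'a measure \<Rightarrow> 'a pmap set \<Rightarrow> 'a pmap set \<Rightarrow> bool" where
  "pg_orth M S T \<longleftrightarrow> dom (rep S) \<inter> dom (rep T) \<in> null_sets M
      \<and> ran (rep S) \<inter> ran (rep T) \<in> null_sets M"

definition pg_is_sum :: "'a measure \<Rightarrow> 'a pmap set set \<Rightarrow> 'a pmap set \<Rightarrow> bool" where
  "pg_is_sum M A T \<longleftrightarrow> (AE x in M. (\<forall>S\<in>A. rep S x \<noteq> None \<longrightarrow> rep T x = rep S x)
                              \<and> ((\<forall>S\<in>A. rep S x = None) \<longrightarrow> rep T x = None))"

definition pg_Sigma :: "'a measure \<Rightarrow> ('a \<times> 'a) set \<Rightarrow> 'a pmap set set \<Rightarrow> 'a pmap set set" where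
  "pg_Sigma M R G = {T \<in> fullpg M R. \<exists>A. finite A \<and> A \<subseteq> G
      \<and> (\<forall>S\<in>A. \<forall>S'\<in>A. S \<noteq> S' \<longrightarrow> pg_orth M S S') \<and> pg_is_sum M A T}"

definition pg_pm :: "'a measure \<Rightarrow> ('a \<times> 'a) set \<Rightarrow> 'a pmap set set \<Rightarrow> 'a pmap set set" where
  "pg_pm M R G = G \<union> pg_inv M R ` G \<union> {pg_one M R}"

primrec pg_pow :: "'a measure \<Rightarrow> ('a \<times> 'a) set \<Rightarrow> 'a pmap set set \<Rightarrow> nat \<Rightarrow> 'a pmap set set" where
  "pg_pow M R G 0 = {pg_one M R}"
| "pg_pow M R G (Suc n) = {pg_mult M R s t | s t. s \<in> pg_pm M R G \<and> t \<in> pg_pow M R G n}"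

definition ppd :: "nat \<Rightarrow> (nat \<Rightarrow> nat option) set" where
  "ppd d = {\<sigma>. dom \<sigma> \<subseteq> {1..d} \<and> ran \<sigma> \<subseteq> {1..d} \<and> inj_on \<sigma> (dom \<sigma>)}"

definition pp_one :: "nat \<Rightarrow> nat \<Rightarrow> nat option" where
  "pp_one d = (\<lambda>i. if i \<in> {1..d} then Some i else None)"

definition pp_dist :: "nat \<Rightarrow> (nat \<Rightarrow> nat option) \<Rightarrow> (nat \<Rightarrow> nat option) \<Rightarrow> real" where
  "pp_dist d \<sigma> \<tau> = real (card {i\<in>{1..d}. \<sigma> i \<noteq> \<tau> i}) / real d"

definition pp_tr :: "nat \<Rightarrow> (nat \<Rightarrow> nat option) \<Rightarrow> real" where
  "pp_tr d \<sigma> = real (card {i\<in>{1..d}. \<sigma> i = Some i}) / real d"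

definition sa_maps :: "'a measure \<Rightarrow> ('a \<times> 'a) set \<Rightarrow> nat \<Rightarrow> ('a pmap set \<Rightarrow> nat \<Rightarrow> nat option) set" where
  "sa_maps M R d = {\<phi>. \<forall>s\<in>fullpg M R. \<phi> s \<in> ppd d}"

definition SA :: "'a measure \<Rightarrow> ('a \<times> 'a) set \<Rightarrow> 'a pmap set set \<Rightarrow> nat \<Rightarrow> real \<Rightarrow> nat
    \<Rightarrow> ('a pmap set \<Rightarrow> nat \<Rightarrow> nat option) set" where
  "SA M R F n \<delta> d = {\<phi> \<in> sa_maps M R d. \<phi> (pg_one M R) = pp_one d
     \<and> (\<forall>s\<in>pg_Sigma M R (pg_pow M R (pg_pm M R F) n). \<forall>t\<in>pg_Sigma M R (pg_pow M R (pg_pm M R F) n).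
          pg_mult M R s t \<in> pg_Sigma M R (pg_pow M R (pg_pm M R F) n) \<longrightarrow>
          pp_dist d (\<phi> (pg_mult M R s t)) (\<phi> s \<circ>\<^sub>m \<phi> t) < \<delta>)
     \<and> (\<forall>s\<in>pg_Sigma M R (pg_pow M R (pg_pm M R F) n). \<bar>pp_tr d (\<phi> s) - pg_tr M s\<bar> < \<delta>)}"

definition fball :: "'a pmap set set \<Rightarrow> nat \<Rightarrow> ('a pmap set \<Rightarrow> nat \<Rightarrow> nat option) \<Rightarrow> real
    \<Rightarrow> ('a pmap set \<Rightarrow> nat \<Rightarrow> nat option) set" where
  "fball F d \<psi> \<epsilon> = {\<phi>. \<forall>s\<in>F. pp_dist d (\<phi> s) (\<psi> s) \<le> \<epsilon>}"

definition covnum :: "'a measure \<Rightarrow> ('a \<times> 'a) set \<Rightarrow> 'a pmap set set \<Rightarrow> nat \<Rightarrow> real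
    \<Rightarrow> ('a pmap set \<Rightarrow> nat \<Rightarrow> nat option) set \<Rightarrow> nat" where
  "covnum M R F d \<epsilon> S = (LEAST k. \<exists>C. finite C \<and> C \<subseteq> sa_maps M R d \<and> card C = k
       \<and> S \<subseteq> (\<Union>\<psi>\<in>C. fball F d \<psi> \<epsilon>))"

definition sa_term :: "'a measure \<Rightarrow> ('a \<times> 'a) set \<Rightarrow> 'a pmap set set \<Rightarrow> real \<Rightarrow> nat \<Rightarrow> real \<Rightarrow> nat \<Rightarrow> ereal" where
  "sa_term M R F \<epsilon> n \<delta> d =
     (let N = covnum M R F d \<epsilon> (SA M R F n \<delta> d) in
      if N = 0 then -\<infinity> else ereal (ln (real N) / (real d * ln (real d))))"

definition s_eps :: "'a measure \<Rightarrow> ('a \<times> 'a) set \<Rightarrow> 'a pmap set set \<Rightarrow> real \<Rightarrow> ereal" where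
  "s_eps M R F \<epsilon> = (INF n. INF \<delta>\<in>{0<..}. limsup (\<lambda>d. sa_term M R F \<epsilon> n \<delta> d))"

definition ls_eps :: "'a measure \<Rightarrow> ('a \<times> 'a) set \<Rightarrow> 'a pmap set set \<Rightarrow> real \<Rightarrow> ereal" where
  "ls_eps M R F \<epsilon> = (INF n. INF \<delta>\<in>{0<..}. liminf (\<lambda>d. sa_term M R F \<epsilon> n \<delta> d))"

definition nonprincipal_ultrafilter :: "nat filter \<Rightarrow> bool" where
  "nonprincipal_ultrafilter \<omega> \<longleftrightarrow> \<omega> \<noteq> bot
     \<and> (\<forall>P. eventually P \<omega> \<or> eventually (\<lambda>x. \<not> P x) \<omega>)
     \<and> (\<forall>n. eventually (\<lambda>x. x \<noteq> n) \<omega>)"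

definition so_eps :: "'a measure \<Rightarrow> ('a \<times> 'a) set \<Rightarrow> 'a pmap set set \<Rightarrow> nat filter \<Rightarrow> real \<Rightarrow> ereal" where
  "so_eps M R F \<omega> \<epsilon> = (INF n. INF \<delta>\<in>{0<..}. Lim \<omega> (\<lambda>d. sa_term M R F \<epsilon> n \<delta> d))"

end

theory Submission imports Defs begin

definition Bset :: "nat \<Rightarrow> (nat \<Rightarrow> nat option) \<Rightarrow> nat \<Rightarrow> (nat \<Rightarrow> nat option) set" where
  "Bset d \<tau> m = {\<sigma>\<in>ppd d. card {i\<in>{1..d}. \<sigma> i \<noteq> \<tau> i} \<le> m}"

lemma Bset_card: "finite (Bset d \<tau> m) \<and> card (Bset d \<tau> m) \<le> 2^d * (d+1)^m"
proof -
  define V where "V = insert None (Some ` {1..d})"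
  define G where "G D = (\<lambda>h i. if i\<in>D then h i else if i \<in> {1..d} then \<tau> i else None) ` PiE D (\<lambda>_. V)" for D :: "nat set"
  define I where "I = {D. D \<subseteq> {1..d} \<and> card D \<le> m}"
  have cV: "card V = d + 1" unfolding V_def
    by (subst card_insert_disjoint) (auto simp: card_image)
  have fV: "finite V" unfolding V_def by auto
  have sub: "Bset d \<tau> m \<subseteq> (\<Union>D\<in>I. G D)"
  proof
    fix \<sigma> assume s: "\<sigma> \<in> Bset d \<tau> m"
    define D where "D = {i\<in>{1..d}. \<sigma> i \<noteq> \<tau> i}"
    have p: "dom \<sigma> \<subseteq> {1..d}" "ran \<sigma> \<subseteq> {1..d}" using s by (auto simp: Bset_def ppd_def)
    have "D \<in> I" using s by (auto simp: I_def D_def Bset_def)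
    moreover have "\<sigma> = (\<lambda>h i. if i\<in>D then h i else if i \<in> {1..d} then \<tau> i else None) (restrict \<sigma> D)"
    proof
      fix i show "\<sigma> i = (\<lambda>h i. if i\<in>D then h i else if i \<in> {1..d} then \<tau> i else None) (restrict \<sigma> D) i"
        using p by (auto simp: D_def dom_def)
    qed
    moreover have "restrict \<sigma> D \<in> PiE D (\<lambda>_. V)"
    proof -
      have "\<sigma> i \<in> V" for i
      proof (cases "\<sigma> i")
        case (Some y) then have "y \<in> ran \<sigma>" by (auto simp: ran_def)
        then show ?thesis using p Some by (auto simp: V_def)
      qed (auto simp: V_def)
      then show ?thesis by auto
    qed
    ultimately show "\<sigma> \<in> (\<Union>D\<in>I. G D)" unfolding G_def by blast
  qed
  have fI: "finite I" unfolding I_def by (rule finite_subset[of _ "Pow {1..d}"]) auto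
  have cI: "card I \<le> 2^d"
  proof -
    have "card I \<le> card (Pow {1..d::nat})" by (rule card_mono) (auto simp: I_def)
    then show ?thesis by (simp add: card_Pow)
  qed
  have fD: "D \<in> I \<Longrightarrow> finite D" for D unfolding I_def using finite_subset by blast
  have fG: "D \<in> I \<Longrightarrow> finite (G D)" for D unfolding G_def using fD fV by (auto intro!: finite_PiE)
  have cG: "D \<in> I \<Longrightarrow> card (G D) \<le> (d+1)^m" for D
  proof -
    assume D: "D \<in> I"
    have "card (G D) \<le> card (PiE D (\<lambda>_. V))" unfolding G_def by (rule card_image_le) (use fD D fV in \<open>auto intro!: finite_PiE\<close>)
    also have "\<dots> = (d+1)^card D" using fD[OF D] by (simp add: card_PiE cV)
    also have "\<dots> \<le> (d+1)^m" using D by (auto simp: I_def intro: power_increasing)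
    finally show ?thesis .
  qed
  have fU: "finite (\<Union>D\<in>I. G D)" using fI fG by auto
  have "card (Bset d \<tau> m) \<le> card (\<Union>D\<in>I. G D)" by (rule card_mono[OF fU sub])
  also have "\<dots> \<le> (\<Sum>D\<in>I. card (G D))" by (rule card_UN_le[OF fI])
  also have "\<dots> \<le> (\<Sum>D\<in>I. (d+1)^m)" by (rule sum_mono) (rule cG)
  also have "\<dots> = card I * (d+1)^m" by simp
  also have "\<dots> \<le> 2^d * (d+1)^m" using cI by simp
  finally show ?thesis using finite_subset[OF sub fU] by simp
qed

definition iscov :: "'a measure \<Rightarrow> ('a \<times> 'a) set \<Rightarrow> 'a pmap set set \<Rightarrow> nat \<Rightarrow> real
    \<Rightarrow> ('a pmap set \<Rightarrow> nat \<Rightarrow> nat option) set \<Rightarrow> ('a pmap set \<Rightarrow> nat \<Rightarrow> nat option) set \<Rightarrow> bool" where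
  "iscov M R F d e S C \<longleftrightarrow> finite C \<and> C \<subseteq> sa_maps M R d \<and> S \<subseteq> (\<Union>\<psi>\<in>C. fball F d \<psi> e)"

lemma pp_dist_card:
  assumes "pp_dist d \<sigma> \<tau> \<le> e" "\<forall>k::nat. real k \<le> e * real d \<longrightarrow> k \<le> m"
  shows "card {i\<in>{1..d}. \<sigma> i \<noteq> \<tau> i} \<le> m"
proof (cases "d = 0")
  case True then show ?thesis by simp
next
  case False
  then have "real (card {i\<in>{1..d}. \<sigma> i \<noteq> \<tau> i}) \<le> e * real d"
    using assms(1) by (simp add: pp_dist_def pos_divide_le_eq)
  then show ?thesis using assms(2) by blast
qed

lemma refine:
  assumes cov: "iscov M R F d e S C" and S: "S \<subseteq> sa_maps M R d" and F: "F \<subseteq> fullpg M R" "finite F"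
    and m: "\<forall>k::nat. real k \<le> e * real d \<longrightarrow> k \<le> m"
  shows "\<exists>C0. iscov M R F d 0 S C0 \<and> card C0 \<le> card C * (2^d*(d+1)^m)^card F"
proof -
  define K where "K = 2^d*(d+1)^m"
  define P where "P = (\<lambda>\<phi>. restrict \<phi> F) ` S"
  define Q where "Q \<psi> = PiE F (\<lambda>s. Bset d (\<psi> s) m)" for \<psi> :: "'a pmap set \<Rightarrow> nat \<Rightarrow> nat option"
  have fC: "finite C" using cov by (simp add: iscov_def)
  have PQ: "P \<subseteq> (\<Union>\<psi>\<in>C. Q \<psi>)"
  proof
    fix r assume "r \<in> P"
    then obtain \<phi> where \<phi>: "\<phi> \<in> S" "r = restrict \<phi> F" by (auto simp: P_def)
    then obtain \<psi> where \<psi>: "\<psi> \<in> C" "\<phi> \<in> fball F d \<psi> e" using cov by (auto simp: iscov_def)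
    have "restrict \<phi> F \<in> Q \<psi>" unfolding Q_def
    proof (rule restrict_PiE_iff[THEN iffD2], intro ballI)
      fix s assume s: "s \<in> F"
      then have "\<phi> s \<in> ppd d" using \<phi>(1) S F(1) by (auto simp: sa_maps_def)
      moreover have "pp_dist d (\<phi> s) (\<psi> s) \<le> e" using \<psi>(2) s by (auto simp: fball_def)
      ultimately show "\<phi> s \<in> Bset d (\<psi> s) m" using pp_dist_card[OF _ m] by (auto simp: Bset_def)
    qed
    then show "r \<in> (\<Union>\<psi>\<in>C. Q \<psi>)" using \<phi> \<psi> by auto
  qed
  have fQ: "finite (Q \<psi>)" for \<psi> unfolding Q_def using Bset_card F(2) by (auto intro!: finite_PiE)
  have cQ: "card (Q \<psi>) \<le> K^card F" for \<psi>
  proof -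
    have "card (Q \<psi>) = (\<Prod>s\<in>F. card (Bset d (\<psi> s) m))" unfolding Q_def using F(2) by (simp add: card_PiE)
    also have "\<dots> \<le> (\<Prod>s\<in>F. K)" by (rule prod_mono) (use Bset_card K_def in auto)
    finally show ?thesis by simp
  qed
  have fU: "finite (\<Union>\<psi>\<in>C. Q \<psi>)" using fC fQ by auto
  have fP: "finite P" using finite_subset[OF PQ fU] .
  have cP: "card P \<le> card C * K^card F"
  proof -
    have "card P \<le> card (\<Union>\<psi>\<in>C. Q \<psi>)" by (rule card_mono[OF fU PQ])
    also have "\<dots> \<le> (\<Sum>\<psi>\<in>C. card (Q \<psi>))" by (rule card_UN_le[OF fC])
    also have "\<dots> \<le> (\<Sum>\<psi>\<in>C. K^card F)" by (rule sum_mono) (rule cQ)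
    finally show ?thesis by simp
  qed
  define ch where "ch r = (SOME \<phi>. \<phi> \<in> S \<and> restrict \<phi> F = r)" for r
  have ch: "ch r \<in> S \<and> restrict (ch r) F = r" if rP: "r \<in> P" for r
  proof -
    obtain \<phi> where "\<phi> \<in> S" "restrict \<phi> F = r" using rP by (auto simp: P_def)
    then have "\<exists>\<phi>. \<phi> \<in> S \<and> restrict \<phi> F = r" by blast
    then show ?thesis unfolding ch_def by (rule someI_ex)
  qed
  define C0 where "C0 = ch ` P"
  have "iscov M R F d 0 S C0" unfolding iscov_def
  proof (intro conjI)
    show "finite C0" using fP by (simp add: C0_def)
    show "C0 \<subseteq> sa_maps M R d" using ch S by (auto simp: C0_def)
    show "S \<subseteq> (\<Union>\<psi>\<in>C0. fball F d \<psi> 0)"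
    proof
      fix \<phi> assume \<phi>: "\<phi> \<in> S"
      define r where "r = restrict \<phi> F"
      have r: "r \<in> P" using \<phi> by (simp add: r_def P_def)
      have eq: "\<forall>s\<in>F. ch r s = \<phi> s" using ch[OF r] unfolding r_def by (metis restrict_apply')
      have "\<phi> \<in> fball F d (ch r) 0" using eq by (auto simp: fball_def pp_dist_def)
      then show "\<phi> \<in> (\<Union>\<psi>\<in>C0. fball F d \<psi> 0)" using r by (auto simp: C0_def)
    qed
  qed
  moreover have "card C0 \<le> card C * K^card F" using cP card_image_le[OF fP, of ch] by (simp add: C0_def)
  ultimately show ?thesis by (auto simp: K_def)
qed

lemma iscov_mono: "iscov M R F d e S C \<Longrightarrow> e \<le> e' \<Longrightarrow> iscov M R F d e' S C"
proof -
  assume a: "iscov M R F d e S C" "e \<le> e'"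
  have "fball F d \<psi> e \<subseteq> fball F d \<psi> e'" for \<psi> using a(2) by (auto simp: fball_def)
  then have "(\<Union>\<psi>\<in>C. fball F d \<psi> e) \<subseteq> (\<Union>\<psi>\<in>C. fball F d \<psi> e')" by blast
  then show ?thesis using a(1) unfolding iscov_def by blast
qed

lemma cov_exists:
  assumes S: "S \<subseteq> sa_maps M R d" and F: "F \<subseteq> fullpg M R" "finite F"
  shows "\<exists>C. iscov M R F d 0 S C"
proof -
  have e: "(\<lambda>_. Map.empty) \<in> sa_maps M R d" by (auto simp: sa_maps_def ppd_def)
  have le1: "pp_dist d \<sigma> \<tau> \<le> 1" for \<sigma> \<tau>
  proof (cases "d = 0")
    case False
    have "card {i\<in>{1..d}. \<sigma> i \<noteq> \<tau> i} \<le> card {1..d}" by (rule card_mono) auto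
    then show ?thesis using False by (simp add: pp_dist_def)
  qed (simp add: pp_dist_def)
  have "iscov M R F d 1 S {\<lambda>_. Map.empty}" using e S le1 by (auto simp: iscov_def fball_def)
  from refine[OF this S F, of d] show ?thesis by auto
qed

lemma covnum_le: "iscov M R F d e S C \<Longrightarrow> covnum M R F d e S \<le> card C"
proof -
  assume "iscov M R F d e S C"
  then show ?thesis unfolding covnum_def iscov_def by (intro Least_le exI[of _ C]) simp
qed

lemma covnum_wit:
  assumes S: "S \<subseteq> sa_maps M R d" and F: "F \<subseteq> fullpg M R" "finite F" and e: "0 \<le> e"
  shows "\<exists>C. iscov M R F d e S C \<and> card C = covnum M R F d e S"
proof -
  obtain C where "iscov M R F d 0 S C" using cov_exists[OF S F] by blast
  then have "iscov M R F d e S C" using iscov_mono e by blast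
  then have "\<exists>k C. finite C \<and> C \<subseteq> sa_maps M R d \<and> card C = k \<and> S \<subseteq> (\<Union>\<psi>\<in>C. fball F d \<psi> e)"
    unfolding iscov_def by blast
  from LeastI_ex[OF this] show ?thesis unfolding covnum_def iscov_def by blast
qed

lemma covnum_zero:
  assumes S: "S \<subseteq> sa_maps M R d" and F: "F \<subseteq> fullpg M R" "finite F" and e: "0 \<le> e"
  shows "covnum M R F d e S = 0 \<longleftrightarrow> S = {}"
proof
  assume "covnum M R F d e S = 0"
  with covnum_wit[OF S F e] obtain C where "iscov M R F d e S C" "card C = 0" by auto
  then show "S = {}" by (auto simp: iscov_def)
next
  assume "S = {}"
  then have "iscov M R F d e S {}" by (simp add: iscov_def)
  from covnum_le[OF this] show "covnum M R F d e S = 0" by simp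
qed

lemma covnum_mono:
  assumes S: "S \<subseteq> sa_maps M R d" and F: "F \<subseteq> fullpg M R" "finite F" and e: "0 \<le> e1" "e1 \<le> e2"
  shows "covnum M R F d e2 S \<le> covnum M R F d e1 S"
proof -
  obtain C where "iscov M R F d e1 S C" "card C = covnum M R F d e1 S" using covnum_wit[OF S F e(1)] by blast
  note C = this
  then have "iscov M R F d e2 S C" using iscov_mono e(2) by blast
  from covnum_le[OF this] show ?thesis using C by simp
qed

lemma covnum_zero_bound:
  assumes S: "S \<subseteq> sa_maps M R d" and F: "F \<subseteq> fullpg M R" "finite F" and e: "0 \<le> e"
  shows "covnum M R F d 0 S \<le> covnum M R F d e S * (2^d*(d+1)^(nat \<lfloor>e * real d\<rfloor>))^card F"
proof -
  obtain C where C: "iscov M R F d e S C" "card C = covnum M R F d e S" using covnum_wit[OF S F e] by blast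
  have m: "\<forall>k::nat. real k \<le> e * real d \<longrightarrow> k \<le> nat \<lfloor>e * real d\<rfloor>"
  proof (intro allI impI)
    fix k :: nat assume "real k \<le> e * real d"
    then have "int k \<le> \<lfloor>e * real d\<rfloor>" by (simp add: le_floor_iff)
    then show "k \<le> nat \<lfloor>e * real d\<rfloor>" by linarith
  qed
  from refine[OF C(1) S F m] obtain C0 where "iscov M R F d 0 S C0"
    "card C0 \<le> card C * (2^d*(d+1)^(nat \<lfloor>e * real d\<rfloor>))^card F" by blast
  then show ?thesis using covnum_le[of M R F d 0 S C0] C(2) by simp
qed

lemma SA_sub: "SA M R F n \<delta> d \<subseteq> sa_maps M R d" by (auto simp: SA_def)

lemma sa_term_mono:
  assumes F: "F \<subseteq> fullpg M R" "finite F" and e: "0 \<le> e1" "e1 \<le> e2"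
  shows "sa_term M R F e2 n \<delta> d \<le> sa_term M R F e1 n \<delta> d"
proof -
  let ?S = "SA M R F n \<delta> d"
  define N1 where "N1 = covnum M R F d e1 ?S"
  define N2 where "N2 = covnum M R F d e2 ?S"
  have le: "N2 \<le> N1" unfolding N1_def N2_def by (rule covnum_mono[OF SA_sub F e])
  have z: "N2 = 0 \<longleftrightarrow> N1 = 0" unfolding N1_def N2_def
    using covnum_zero[OF SA_sub F] e by (metis order_trans)
  have dd: "0 \<le> real d * ln (real d)"
    by (cases "d = 0") (auto intro!: mult_nonneg_nonneg)
  show ?thesis
  proof (cases "N1 = 0")
    case True then show ?thesis using z by (simp add: sa_term_def N1_def[symmetric] N2_def[symmetric])
  next
    case False
    then have "ln (real N2) \<le> ln (real N1)" using z le by simp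
    then have "ln (real N2) / (real d * ln (real d)) \<le> ln (real N1) / (real d * ln (real d))"
      using dd by (rule divide_right_mono)
    then show ?thesis using False z by (simp add: sa_term_def N1_def[symmetric] N2_def[symmetric])
  qed
qed

lemma sa_term_zero_bound:
  assumes F: "F \<subseteq> fullpg M R" "finite F" and e: "0 < e" and d: "2 \<le> d" and l: "ln 2 \<le> e * ln (real d)"
  shows "sa_term M R F 0 n \<delta> d \<le> sa_term M R F e n \<delta> d + ereal (3 * real (card F) * e)"
proof -
  let ?S = "SA M R F n \<delta> d"
  define N0 where "N0 = covnum M R F d 0 ?S"
  define N where "N = covnum M R F d e ?S"
  define m where "m = nat \<lfloor>e * real d\<rfloor>"
  define f where "f = card F"
  have le: "N0 \<le> N * (2^d*(d+1)^m)^f" unfolding N0_def N_def m_def f_def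
    by (rule covnum_zero_bound[OF SA_sub F]) (use e in simp)
  have z: "N0 = 0 \<longleftrightarrow> N = 0" unfolding N0_def N_def
    using covnum_zero[OF SA_sub F] e by (metis order_refl less_imp_le)
  show ?thesis
  proof (cases "N = 0")
    case True then show ?thesis using z by (simp add: sa_term_def N0_def[symmetric] N_def[symmetric])
  next
    case False
    have lnd: "0 < ln (real d)" using d by simp
    have dpos: "0 < real d * ln (real d)" using d lnd by simp
    have r1: "real N0 \<le> real (N * (2^d*(d+1)^m)^f)" using le by (simp only: of_nat_le_iff)
    have r2: "real (N * (2^d*(d+1)^m)^f) = real N * (2^d*(real d+1)^m)^f" by (simp add: add.commute)
    have "ln (real N0) \<le> ln (real N * (2^d*(real d+1)^m)^f)"
      using r1 r2 False z by (subst ln_le_cancel_iff) auto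
    also have "\<dots> = ln (real N) + f * (d * ln 2 + m * ln (real d + 1))"
      using False by (simp add: ln_mult ln_realpow)
    also have "\<dots> \<le> ln (real N) + f * (d * (e * ln d) + (e * d) * (2 * ln d))"
    proof -
      have ed: "0 \<le> e * real d" using e by simp
      then have "0 \<le> \<lfloor>e * real d\<rfloor>" by simp
      then have "real m = of_int \<lfloor>e * real d\<rfloor>" unfolding m_def by simp
      then have "real m \<le> e * d" using of_int_floor_le[of "e * real d"] by simp
      moreover have "ln (real d + 1) \<le> 2 * ln (real d)"
      proof -
        have "2 * d \<le> d * d" using mult_right_mono[OF d, of d] by simp
        then have "d + 1 \<le> d * d" using d by linarith
        then have "real (d + 1) \<le> real (d * d)" by (simp only: of_nat_le_iff)
        then have "real d + 1 \<le> real d ^ 2" by (simp add: power2_eq_square)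
        then have "ln (real d + 1) \<le> ln (real d ^ 2)" using d by (subst ln_le_cancel_iff) auto
        then show ?thesis using d by (simp add: ln_realpow)
      qed
      moreover have "0 \<le> ln (real d + 1)" by simp
      ultimately have "m * ln (real d + 1) \<le> (e * d) * (2 * ln d)"
        using lnd e by (intro mult_mono) auto
      moreover have "d * ln 2 \<le> d * (e * ln d)" using l by (intro mult_left_mono) auto
      ultimately have s: "d * ln 2 + m * ln (real d + 1) \<le> d * (e * ln d) + (e * d) * (2 * ln d)" by linarith
      show ?thesis by (rule add_left_mono, rule mult_left_mono[OF s]) simp
    qed
    also have "\<dots> = ln (real N) + (3 * f * e) * (real d * ln (real d))" by (simp add: algebra_simps)
    finally have "ln (real N0) / (real d * ln (real d)) \<le> (ln (real N) + (3 * f * e) * (real d * ln (real d))) / (real d * ln (real d))"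
      using dpos by (intro divide_right_mono) auto
    also have "\<dots> = ln (real N) / (real d * ln (real d)) + 3 * f * e" using dpos d by (simp add: add_divide_distrib)
    finally show ?thesis using False z by (simp add: sa_term_def N0_def[symmetric] N_def[symmetric] f_def)
  qed
qed

lemma generic:
  fixes L :: "(nat \<Rightarrow> ereal) \<Rightarrow> ereal" and T :: "real \<Rightarrow> nat \<Rightarrow> real \<Rightarrow> nat \<Rightarrow> ereal"
  assumes Lmono: "\<And>f g. eventually (\<lambda>d. f d \<le> g d) sequentially \<Longrightarrow> L f \<le> L g"
    and Ladd: "\<And>f c. L (\<lambda>d. f d + ereal c) \<le> L f + ereal c"
    and Tmono: "\<And>e n \<delta> d. 0 < e \<Longrightarrow> T e n \<delta> d \<le> T 0 n \<delta> d"
    and Tbound: "\<And>e n \<delta>. 0 < e \<Longrightarrow> eventually (\<lambda>d. T 0 n \<delta> d \<le> T e n \<delta> d + ereal (C*e)) sequentially"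
    and C: "0 \<le> C"
  shows "((\<lambda>e. INF n. INF \<delta>\<in>{0<..}. L (T e n \<delta>)) \<longlongrightarrow> (INF n. INF \<delta>\<in>{0<..}. L (T 0 n \<delta>))) (at_right 0)"
proof -
  define s where "s e = (INF n. INF \<delta>\<in>{(0::real)<..}. L (T e n \<delta>))" for e
  have up: "s e \<le> s 0" if e: "0 < e" for e
    unfolding s_def
  proof (intro INF_greatest)
    fix n \<delta> :: real assume "\<delta> \<in> {0<..}"
    fix n' :: nat
    show "(INF n. INF \<delta>\<in>{0<..}. L (T e n \<delta>)) \<le> L (T 0 n' \<delta>)"
      by (rule INF_lower2[of n'], simp, rule INF_lower2[OF \<open>\<delta> \<in> {0<..}\<close>])
         (rule Lmono, use Tmono[OF e] in auto)
  qed
  have lo: "ereal r1 \<le> s e" if e: "0 < e" and r: "ereal r1 + ereal (C*e) \<le> s 0" for e r1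
    unfolding s_def
  proof (intro INF_greatest)
    fix n :: nat and \<delta> :: real assume d: "\<delta> \<in> {0<..}"
    have "s 0 \<le> L (T 0 n \<delta>)" unfolding s_def by (rule INF_lower2[of n], simp, rule INF_lower[OF d])
    also have "\<dots> \<le> L (\<lambda>d. T e n \<delta> d + ereal (C*e))" by (rule Lmono[OF Tbound[OF e]])
    also have "\<dots> \<le> L (T e n \<delta>) + ereal (C*e)" by (rule Ladd)
    finally have "ereal r1 + ereal (C*e) \<le> L (T e n \<delta>) + ereal (C*e)" using r by simp
    then show "ereal r1 \<le> L (T e n \<delta>)" by (subst (asm) ereal_add_le_add_iff2) simp
  qed
  have "(s \<longlongrightarrow> s 0) (at_right 0)"
  proof (rule order_tendstoI)
    fix a assume "s 0 < a"
    then show "eventually (\<lambda>e. s e < a) (at_right 0)"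
      using eventually_at_right_less[of "0::real"] up by (auto elim!: eventually_mono intro: le_less_trans)
  next
    fix a assume "a < s 0"
    then obtain r where r: "a < ereal r" "ereal r < s 0" using ereal_dense2 by blast
    then obtain r1 where r1: "a < ereal r1" "ereal r1 < ereal r" using ereal_dense2 by blast
    then have rr: "r1 < r" by simp
    define b where "b = (r - r1) / (C + 1)"
    have b: "0 < b" using rr C by (simp add: b_def)
    show "eventually (\<lambda>e. a < s e) (at_right 0)"
      unfolding eventually_at_right_field
    proof (intro exI[of _ b] conjI allI impI)
      show "0 < b" by (rule b)
      fix e :: real assume e: "0 < e" "e < b"
      have "C * e \<le> (C + 1) * e" using e by simp
      also have "\<dots> < (C + 1) * b" using e C by simp
      also have "\<dots> = r - r1" using C by (simp add: b_def)
      finally have "ereal r1 + ereal (C*e) \<le> ereal r" by simp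
      then have "ereal r1 + ereal (C*e) \<le> s 0" using r(2) by (meson less_imp_le order_trans)
      from lo[OF e(1) this] show "a < s e" using r1(1) by simp
    qed
  qed
  then show ?thesis unfolding s_def .
qed

lemma eventually_ln_ge:
  assumes e: "0 < (e::real)"
  shows "eventually (\<lambda>d. 2 \<le> d \<and> ln 2 \<le> e * ln (real d)) sequentially"
proof -
  define N where "N = max 2 (nat \<lceil>exp (ln 2 / e)\<rceil>)"
  show ?thesis unfolding eventually_sequentially
  proof (intro exI[of _ N] allI impI conjI)
    fix d assume d: "N \<le> d"
    then show "2 \<le> d" by (simp add: N_def)
    have "exp (ln 2 / e) \<le> real (nat \<lceil>exp (ln 2 / e)\<rceil>)" by linarith
    also have "\<dots> \<le> real d"
    proof -
      have "nat \<lceil>exp (ln 2 / e)\<rceil> \<le> d" using d unfolding N_def by linarith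
      then show ?thesis by (simp only: of_nat_le_iff)
    qed
    finally have ed: "exp (ln 2 / e) \<le> real d" .
    then have "0 < real d" using exp_gt_zero[of "ln 2 / e"] by linarith
    then have "ln (exp (ln 2 / e)) \<le> ln (real d)" using ed by (subst ln_le_cancel_iff) auto
    then have "ln 2 / e \<le> ln (real d)" by simp
    then show "ln 2 \<le> e * ln (real d)" using e by (simp add: pos_divide_le_eq mult.commute)
  qed
qed

lemma ultra_seq:
  assumes w: "nonprincipal_ultrafilter \<omega>" and P: "eventually P sequentially"
  shows "eventually P \<omega>"
proof -
  obtain N where N: "\<And>n. N \<le> n \<Longrightarrow> P n" using P by (auto simp: eventually_sequentially)
  have "eventually (\<lambda>x. \<forall>k\<in>{..<N}. x \<noteq> k) \<omega>"
    using w by (intro eventually_ball_finite) (auto simp: nonprincipal_ultrafilter_def)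
  then show ?thesis by (rule eventually_mono) (metis N lessThan_iff not_le)
qed

lemma ultra_conv:
  fixes f :: "nat \<Rightarrow> ereal"
  assumes w: "nonprincipal_ultrafilter \<omega>"
  shows "(f \<longlongrightarrow> Lim \<omega> f) \<omega>"
proof -
  have nb: "\<omega> \<noteq> bot" using w by (simp add: nonprincipal_ultrafilter_def)
  have "filtermap f \<omega> \<noteq> bot" using nb by (simp add: filtermap_bot_iff)
  then obtain x where x: "inf (nhds x) (filtermap f \<omega>) \<noteq> bot"
    using compact_UNIV[unfolded compact_filter] by auto
  have "(f \<longlongrightarrow> x) \<omega>"
  proof (rule topological_tendstoI)
    fix S assume S: "open S" "x \<in> S"
    show "eventually (\<lambda>n. f n \<in> S) \<omega>"
    proof (rule ccontr)
      assume "\<not> eventually (\<lambda>n. f n \<in> S) \<omega>"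
      then have "eventually (\<lambda>n. \<not> f n \<in> S) \<omega>" using w by (auto simp: nonprincipal_ultrafilter_def)
      then have e1: "eventually (\<lambda>y. y \<notin> S) (filtermap f \<omega>)" by (simp add: eventually_filtermap)
      have e2: "eventually (\<lambda>y. y \<in> S) (nhds x)" using S by (rule eventually_nhds_in_open)
      have "eventually (\<lambda>_. False) (inf (nhds x) (filtermap f \<omega>))"
        unfolding eventually_inf using e1 e2 by blast
      then show False using x by (simp add: eventually_False)
    qed
  qed
  moreover have "Lim \<omega> f = x" using nb \<open>(f \<longlongrightarrow> x) \<omega>\<close> by (intro tendsto_Lim) auto
  ultimately show ?thesis by simp
qed

theorem mainTheorem10:
  fixes M :: "'a::polish_space measure" and R :: "('a \<times> 'a) set"
    and F :: "'a pmap set set"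
  assumes "prob_space M" and "sets M = sets borel"
    and "pmp_cber M R"
    and "finite F" and "F \<subseteq> fullpg M R"
  shows "((\<lambda>\<epsilon>. s_eps M R F \<epsilon>) \<longlongrightarrow> s_eps M R F 0) (at_right 0)
    \<and> ((\<lambda>\<epsilon>. ls_eps M R F \<epsilon>) \<longlongrightarrow> ls_eps M R F 0) (at_right 0)
    \<and> (\<forall>\<omega>. nonprincipal_ultrafilter \<omega> \<longrightarrow>
          ((\<lambda>\<epsilon>. so_eps M R F \<omega> \<epsilon>) \<longlongrightarrow> so_eps M R F \<omega> 0) (at_right 0))"
proof -
  have F: "F \<subseteq> fullpg M R" "finite F" using assms by auto
  define T where "T = (\<lambda>e n \<delta> d. sa_term M R F e n \<delta> d)"
  define C where "C = 3 * real (card F)"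
  have Tmono: "\<And>e n \<delta> d. 0 < e \<Longrightarrow> T e n \<delta> d \<le> T 0 n \<delta> d"
    unfolding T_def by (rule sa_term_mono[OF F]) auto
  have Tbound: "\<And>e n \<delta>. 0 < e \<Longrightarrow> eventually (\<lambda>d. T 0 n \<delta> d \<le> T e n \<delta> d + ereal (C*e)) sequentially"
  proof -
    fix e n \<delta> assume e: "0 < (e::real)"
    show "eventually (\<lambda>d. T 0 n \<delta> d \<le> T e n \<delta> d + ereal (C*e)) sequentially"
      using eventually_ln_ge[OF e] unfolding T_def C_def
      by (rule eventually_mono) (use sa_term_zero_bound[OF F e] in auto)
  qed
  have C: "0 \<le> C" by (simp add: C_def)
  have nt: "\<not> trivial_limit (sequentially :: nat filter)" by simp
  have 1: "((\<lambda>e. INF n. INF \<delta>\<in>{0<..}. limsup (T e n \<delta>)) \<longlongrightarrow> (INF n. INF \<delta>\<in>{0<..}. limsup (T 0 n \<delta>))) (at_right 0)"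
  proof (rule generic[OF _ _ Tmono Tbound C])
    show "limsup f \<le> limsup g" if "eventually (\<lambda>d. f d \<le> g d) sequentially" for f g :: "nat \<Rightarrow> ereal"
      using that by (rule Limsup_mono)
    show "limsup (\<lambda>d. f d + ereal c) \<le> limsup f + ereal c" for f c
    proof -
      have "limsup (\<lambda>_. ereal c) = ereal c" by (rule Limsup_const[OF nt])
      then show ?thesis using ereal_limsup_add_mono[of f "\<lambda>_. ereal c"] by simp
    qed
  qed auto
  have 2: "((\<lambda>e. INF n. INF \<delta>\<in>{0<..}. liminf (T e n \<delta>)) \<longlongrightarrow> (INF n. INF \<delta>\<in>{0<..}. liminf (T 0 n \<delta>))) (at_right 0)"
  proof (rule generic[OF _ _ Tmono Tbound C])
    show "liminf f \<le> liminf g" if "eventually (\<lambda>d. f d \<le> g d) sequentially" for f g :: "nat \<Rightarrow> ereal"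
      using that by (rule Liminf_mono)
    show "liminf (\<lambda>d. f d + ereal c) \<le> liminf f + ereal c" for f c
    proof -
      have "limsup (\<lambda>_. ereal c) = ereal c" by (rule Limsup_const[OF nt])
      then show ?thesis using ereal_liminf_limsup_add[of f "\<lambda>_. ereal c"] by simp
    qed
  qed auto
  have 3: "((\<lambda>e. INF n. INF \<delta>\<in>{0<..}. Lim \<omega> (T e n \<delta>)) \<longlongrightarrow> (INF n. INF \<delta>\<in>{0<..}. Lim \<omega> (T 0 n \<delta>))) (at_right 0)"
    if w: "nonprincipal_ultrafilter \<omega>" for \<omega>
  proof (rule generic[OF _ _ Tmono Tbound C])
    have nb: "\<omega> \<noteq> bot" using w by (simp add: nonprincipal_ultrafilter_def)
    show "Lim \<omega> f \<le> Lim \<omega> g" if "eventually (\<lambda>d. f d \<le> g d) sequentially" for f g :: "nat \<Rightarrow> ereal"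
      by (rule tendsto_le[OF nb ultra_conv[OF w] ultra_conv[OF w] ultra_seq[OF w that]])
    show "Lim \<omega> (\<lambda>d. f d + ereal c) \<le> Lim \<omega> f + ereal c" for f c
    proof -
      have "((\<lambda>d. f d + ereal c) \<longlongrightarrow> Lim \<omega> f + ereal c) \<omega>"
        by (rule tendsto_add_ereal_general1[OF _ ultra_conv[OF w] tendsto_const]) simp
      then have "Lim \<omega> (\<lambda>d. f d + ereal c) = Lim \<omega> f + ereal c" using nb by (intro tendsto_Lim) auto
      then show ?thesis by simp
    qed
  qed auto
  show ?thesis
    using 1 2 3 unfolding s_eps_def ls_eps_def so_eps_def T_def by simp
qed

end
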